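(* Let $Y$ be a real Banach space and $\varepsilon>0$. Define $f:B_Y\times B_Y\times B_{Y^*}\to\mathbb{R}$ by $$f(x,y,x^* )=\sup_{t\ge\varepsilon}\Big(1-\frac{\|x+ty\|}{|x^*(x)|+t}\Big).$$ If $\delta>0$, $x,\tilde x,y,\tilde y\in B_Y$ with $\|x-\tilde x\|\le\delta$, $\|y-\tilde y\|\le\delta$, and $x^*,\tilde x^*\in B_{Y^*}$ with $\|x^*-\tilde x^*\|\le\delta$, then $$|f(x,y,x^* )-f(\tilde x,\tilde y,\tilde x^* )|\le\delta\,(3/\varepsilon+2/\varepsilon^2+1).$$
   Context: $B_Y$ and $B_{Y^*}$ denote the closed unit balls of $Y$ and of its dual $Y^*$. *)

theory Defs
  imports "HOL-Analysis.Analysis"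
begin

definition fdef :: "real \<Rightarrow> 'a::real_normed_vector \<Rightarrow> 'a \<Rightarrow> ('a \<Rightarrow>\<^sub>L real) \<Rightarrow> real" where
  "fdef eps x y xs = (SUP t\<in>{eps..}. 1 - norm (x + t *\<^sub>R y) / (\<bar>blinfun_apply xs x\<bar> + t))"

end

theory Submission
  imports Defs
begin

lemma real_key:
  fixes a a' N N' t d :: real
  assumes t: "t > 0" and a: "a \<ge> 0" "a' \<ge> 0"
    and NN: "\<bar>N - N'\<bar> \<le> d * (1 + t)" and N': "0 \<le> N'" "N' \<le> 1 + t"
    and aa: "\<bar>a - a'\<bar> \<le> 2 * d" and d: "d \<ge> 0"
  shows "\<bar>N/(a+t) - N'/(a'+t)\<bar> \<le> d * (1+t) / t + 2 * d * (1 + t) / t^2"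
proof -
  have p: "a + t > 0" "a' + t > 0" using a t by auto
  have eq: "N/(a+t) - N'/(a'+t) = (N-N')/(a+t) + N'*(a'-a)/((a+t)*(a'+t))"
  proof -
    have "(N-N')/(a+t) + N'*(a'-a)/((a+t)*(a'+t)) = ((N-N')*(a'+t) + N'*(a'-a))/((a+t)*(a'+t))"
      using p by (simp add: add_divide_distrib)
    also have "\<dots> = (N*(a'+t) - N'*(a+t))/((a+t)*(a'+t))" by (simp add: algebra_simps)
    also have "\<dots> = N/(a+t) - N'/(a'+t)" using p by (simp add: diff_divide_distrib)
    finally show ?thesis by simp
  qed
  have b1: "\<bar>(N-N')/(a+t)\<bar> \<le> d*(1+t)/t"
  proof -
    have "\<bar>(N-N')/(a+t)\<bar> = \<bar>N-N'\<bar>/(a+t)" using p by simp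
    also have "\<dots> \<le> d*(1+t)/(a+t)" using NN p by (simp add: divide_right_mono)
    also have "\<dots> \<le> d*(1+t)/t" using t a d by (intro divide_left_mono) auto
    finally show ?thesis .
  qed
  have b2: "\<bar>N'*(a'-a)/((a+t)*(a'+t))\<bar> \<le> 2*d*(1+t)/t^2"
  proof -
    have "\<bar>N'*(a'-a)/((a+t)*(a'+t))\<bar> = N'*\<bar>a-a'\<bar>/((a+t)*(a'+t))"
      using p N' by (simp add: abs_mult abs_minus_commute)
    also have "\<dots> \<le> (1+t)*(2*d)/((a+t)*(a'+t))"
      using p N' aa by (intro divide_right_mono mult_mono) auto
    also have "\<dots> \<le> (1+t)*(2*d)/(t*t)"
      using t a d by (intro divide_left_mono mult_mono) auto
    finally show ?thesis by (simp add: power2_eq_square mult.commute mult.left_commute)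
  qed
  show ?thesis unfolding eq using b1 b2 abs_triangle_ineq[of "(N-N')/(a+t)" "N'*(a'-a)/((a+t)*(a'+t))"]
    by linarith
qed

lemma t_bound:
  fixes eps t d :: real
  assumes "eps > 0" "t \<ge> eps" "d \<ge> 0"
  shows "d * (1+t) / t + 2 * d * (1 + t) / t^2 \<le> d * (3 / eps + 2 / eps\<^sup>2 + 1)"
proof -
  have t: "t > 0" using assms by auto
  have "d * (1+t) / t + 2 * d * (1 + t) / t^2 = d * (1 + 3/t + 2/t^2)"
    using t by (simp add: field_simps power2_eq_square)
  also have "\<dots> \<le> d * (1 + 3/eps + 2/eps^2)"
  proof -
    have "3/t \<le> 3/eps" using assms by (intro divide_left_mono) auto
    moreover have "2/t^2 \<le> 2/eps^2" using assms by (intro divide_left_mono power_mono) auto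
    ultimately show ?thesis using assms by (intro mult_left_mono) auto
  qed
  finally show ?thesis by (simp add: algebra_simps)
qed

lemma pointwise:
  fixes eps \<delta> t :: real
    and x x' y y' :: "'a::banach"
    and xs xs' :: "'a \<Rightarrow>\<^sub>L real"
  assumes "eps > 0" and "\<delta> > 0" and "t \<ge> eps"
    and "norm x \<le> 1" "norm x' \<le> 1" "norm y \<le> 1" "norm y' \<le> 1"
    and "norm xs \<le> 1" "norm xs' \<le> 1"
    and "norm (x - x') \<le> \<delta>" "norm (y - y') \<le> \<delta>" "norm (xs - xs') \<le> \<delta>"
  shows "\<bar>norm (x + t *\<^sub>R y) / (\<bar>blinfun_apply xs x\<bar> + t)
        - norm (x' + t *\<^sub>R y') / (\<bar>blinfun_apply xs' x'\<bar> + t)\<bar>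
         \<le> \<delta> * (3 / eps + 2 / eps\<^sup>2 + 1)"
proof -
  have t: "t > 0" using assms by auto
  have NN: "\<bar>norm (x + t *\<^sub>R y) - norm (x' + t *\<^sub>R y')\<bar> \<le> \<delta> * (1 + t)"
  proof -
    have "\<bar>norm (x + t *\<^sub>R y) - norm (x' + t *\<^sub>R y')\<bar> \<le> norm ((x + t *\<^sub>R y) - (x' + t *\<^sub>R y'))"
      by (rule norm_triangle_ineq3)
    also have "(x + t *\<^sub>R y) - (x' + t *\<^sub>R y') = (x - x') + t *\<^sub>R (y - y')"
      by (simp add: algebra_simps)
    also have "norm \<dots> \<le> norm (x - x') + t * norm (y - y')"
      using norm_triangle_ineq[of "x-x'" "t *\<^sub>R (y - y')"] t by simp
    also have "\<dots> \<le> \<delta> + t * \<delta>" using assms t by (intro add_mono mult_left_mono) auto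
    finally show ?thesis by (simp add: algebra_simps)
  qed
  have N': "norm (x' + t *\<^sub>R y') \<le> 1 + t"
  proof -
    have "norm (x' + t *\<^sub>R y') \<le> norm x' + t * norm y'"
      using norm_triangle_ineq[of x' "t *\<^sub>R y'"] t by simp
    also have "\<dots> \<le> 1 + t * 1" using assms t by (intro add_mono mult_left_mono) auto
    finally show ?thesis by simp
  qed
  have aa: "\<bar>\<bar>blinfun_apply xs x\<bar> - \<bar>blinfun_apply xs' x'\<bar>\<bar> \<le> 2 * \<delta>"
  proof -
    have e: "blinfun_apply xs x - blinfun_apply xs' x' = blinfun_apply xs (x - x') + blinfun_apply (xs - xs') x'"
      by (simp add: blinfun.diff_right blinfun.diff_left)
    have "\<bar>blinfun_apply xs (x - x')\<bar> \<le> norm xs * norm (x - x')"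
      using norm_blinfun[of xs "x-x'"] by simp
    also have "\<dots> \<le> 1 * \<delta>" using assms by (intro mult_mono) auto
    finally have 1: "\<bar>blinfun_apply xs (x - x')\<bar> \<le> \<delta>" by simp
    have "\<bar>blinfun_apply (xs - xs') x'\<bar> \<le> norm (xs - xs') * norm x'"
      using norm_blinfun[of "xs - xs'" x'] by simp
    also have "\<dots> \<le> \<delta> * 1" using assms by (intro mult_mono) auto
    finally have 2: "\<bar>blinfun_apply (xs - xs') x'\<bar> \<le> \<delta>" by simp
    have "\<bar>\<bar>blinfun_apply xs x\<bar> - \<bar>blinfun_apply xs' x'\<bar>\<bar> \<le> \<bar>blinfun_apply xs x - blinfun_apply xs' x'\<bar>"
      by (rule abs_triangle_ineq3)
    then show ?thesis using e 1 2 by linarith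
  qed
  have "\<bar>norm (x + t *\<^sub>R y) / (\<bar>blinfun_apply xs x\<bar> + t)
        - norm (x' + t *\<^sub>R y') / (\<bar>blinfun_apply xs' x'\<bar> + t)\<bar>
     \<le> \<delta> * (1+t) / t + 2 * \<delta> * (1 + t) / t^2"
    by (rule real_key[OF t _ _ NN _ N' aa]) (use assms in auto)
  also have "\<dots> \<le> \<delta> * (3 / eps + 2 / eps\<^sup>2 + 1)"
    using t_bound assms by auto
  finally show ?thesis .
qed

lemma bdd_g:
  fixes eps :: real and x y :: "'a::real_normed_vector" and xs :: "'a \<Rightarrow>\<^sub>L real"
  assumes "eps > 0"
  shows "bdd_above ((\<lambda>t. 1 - norm (x + t *\<^sub>R y) / (\<bar>blinfun_apply xs x\<bar> + t)) ` {eps..})"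
proof (rule bdd_aboveI2[where M=1])
  fix t assume "t \<in> {eps..}"
  then have "\<bar>blinfun_apply xs x\<bar> + t > 0" using assms by auto
  then show "1 - norm (x + t *\<^sub>R y) / (\<bar>blinfun_apply xs x\<bar> + t) \<le> 1" by simp
qed

lemma sup_diff:
  fixes g h :: "real \<Rightarrow> real" and S :: "real set"
  assumes "S \<noteq> {}" "bdd_above (h ` S)" "\<And>t. t \<in> S \<Longrightarrow> g t \<le> h t + C"
  shows "(SUP t\<in>S. g t) \<le> (SUP t\<in>S. h t) + C"
proof -
  have "(SUP t\<in>S. g t) - C \<le> (SUP t\<in>S. h t)"
  proof -
    have "\<And>t. t \<in> S \<Longrightarrow> g t \<le> (SUP t\<in>S. h t) + C"
      using assms cSUP_upper[OF _ assms(2)] by (meson add_right_mono order_trans)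
    then have "(SUP t\<in>S. g t) \<le> (SUP t\<in>S. h t) + C"
      using assms(1) by (intro cSUP_least) auto
    then show ?thesis by simp
  qed
  then show ?thesis by simp
qed

theorem lemma2p1:
  fixes eps \<delta> :: real
    and x x' y y' :: "'a::banach"
    and xs xs' :: "'a \<Rightarrow>\<^sub>L real"
  assumes "eps > 0" and "\<delta> > 0"
    and "norm x \<le> 1" "norm x' \<le> 1" "norm y \<le> 1" "norm y' \<le> 1"
    and "norm xs \<le> 1" "norm xs' \<le> 1"
    and "norm (x - x') \<le> \<delta>" "norm (y - y') \<le> \<delta>" "norm (xs - xs') \<le> \<delta>"
  shows "\<bar>fdef eps x y xs - fdef eps x' y' xs'\<bar> \<le> \<delta> * (3 / eps + 2 / eps\<^sup>2 + 1)"
proof -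
  let ?C = "\<delta> * (3 / eps + 2 / eps\<^sup>2 + 1)"
  have ne: "{eps..} \<noteq> {}" by auto
  have pw: "\<And>t. t \<in> {eps..} \<Longrightarrow> \<bar>norm (x + t *\<^sub>R y) / (\<bar>blinfun_apply xs x\<bar> + t)
        - norm (x' + t *\<^sub>R y') / (\<bar>blinfun_apply xs' x'\<bar> + t)\<bar> \<le> ?C"
    using pointwise[OF assms(1,2) _ assms(3-)] by auto
  have 1: "fdef eps x y xs \<le> fdef eps x' y' xs' + ?C"
    unfolding fdef_def
    by (rule sup_diff[OF ne bdd_g[OF assms(1)]]) (use pw in force)
  have 2: "fdef eps x' y' xs' \<le> fdef eps x y xs + ?C"
    unfolding fdef_def
    by (rule sup_diff[OF ne bdd_g[OF assms(1)]]) (use pw in force)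
  show ?thesis using 1 2 by linarith
qed

end
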